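(* Let $G=(V,E)$ be an entropy-minimal finite simple graph. Then for every nonempty $S\subseteq V$, the bipartite graph $G[c(S),S]$ has no matching saturating $S$.
   Context: For an integer $q \ge 2$ let $[q]=\{0,\dots,q-1\}$. For $f=(f_1,\dots,f_n):[q]^n\to[q]^n$, the interaction graph $\mathrm{IG}(f)$ is the digraph on $\{1,\dots,n\}$ with an arc $(u,v)$ iff $f_v$ depends essentially on $x_u$ (there exist $a,b\in[q]^n$ differing only in coordinate $u$ with $f_v(a)\ne f_v(b)$). A simple graph is viewed as the digraph with both arcs for each edge and no loops. The $q$-guessing number is $\mathrm{gn}(G,q)=\max\{\log_q|\mathrm{Fix}(f)| : \mathrm{IG}(f)\subseteq G\}$ and the entropy is $H(G)=\sup_{q\ge2}\mathrm{gn}(G,q)$. A simple graph $G$ is entropy-minimal if for every simple graph $G'$ with fewer vertices than $G$, $H(G')-\lfloor H(G')\rfloor \ne H(G)-\lfloor H(G)\rfloor$. For nonempty $S\subseteq V$, $c(S)=\{v\in V\setminus S : N(v)\subseteq S\}$, where $N(v)$ is the neighbourhood of $v$. For disjoint $S,T$, $G[S,T]$ is the bipartite graph with parts $S,T$ and the edges of $G$ between $S$ and $T$; a matching saturates $S$ if it covers every vertex of $S$. *)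

theory Defs
  imports Complex_Main
begin

definition simple_graph :: "'a set \<Rightarrow> ('a \<Rightarrow> 'a \<Rightarrow> bool) \<Rightarrow> bool" where
  "simple_graph V E \<longleftrightarrow> finite V \<and> (\<forall>u v. E u v \<longrightarrow> u \<in> V \<and> v \<in> V)
     \<and> (\<forall>u v. E u v \<longrightarrow> E v u) \<and> (\<forall>u. \<not> E u u)"

definition configs :: "'a set \<Rightarrow> nat \<Rightarrow> ('a \<Rightarrow> nat) set" where
  "configs V q = {x. (\<forall>v\<in>V. x v < q) \<and> (\<forall>v. v \<notin> V \<longrightarrow> x v = 0)}"

definition is_map :: "'a set \<Rightarrow> nat \<Rightarrow> (('a \<Rightarrow> nat) \<Rightarrow> ('a \<Rightarrow> nat)) \<Rightarrow> bool" where
  "is_map V q f \<longleftrightarrow> (\<forall>x\<in>configs V q. f x \<in> configs V q)"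

definition depends :: "'a set \<Rightarrow> nat \<Rightarrow> (('a \<Rightarrow> nat) \<Rightarrow> ('a \<Rightarrow> nat)) \<Rightarrow> 'a \<Rightarrow> 'a \<Rightarrow> bool" where
  "depends V q f u v \<longleftrightarrow> (\<exists>a\<in>configs V q. \<exists>b\<in>configs V q.
      (\<forall>w. w \<noteq> u \<longrightarrow> a w = b w) \<and> f a v \<noteq> f b v)"

text \<open>IG(f) \<subseteq> G, G viewed as digraph with both arcs per edge and no loops.\<close>
definition IG_sub :: "'a set \<Rightarrow> ('a \<Rightarrow> 'a \<Rightarrow> bool) \<Rightarrow> nat \<Rightarrow> (('a \<Rightarrow> nat) \<Rightarrow> ('a \<Rightarrow> nat)) \<Rightarrow> bool" where
  "IG_sub V E q f \<longleftrightarrow> (\<forall>u\<in>V. \<forall>v\<in>V. depends V q f u v \<longrightarrow> E u v)"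

definition Fix :: "'a set \<Rightarrow> nat \<Rightarrow> (('a \<Rightarrow> nat) \<Rightarrow> ('a \<Rightarrow> nat)) \<Rightarrow> ('a \<Rightarrow> nat) set" where
  "Fix V q f = {x \<in> configs V q. f x = x}"

definition gn :: "'a set \<Rightarrow> ('a \<Rightarrow> 'a \<Rightarrow> bool) \<Rightarrow> nat \<Rightarrow> real" where
  "gn V E q = Max {log (real q) (real (card (Fix V q f))) | f. is_map V q f \<and> IG_sub V E q f}"

definition entropy :: "'a set \<Rightarrow> ('a \<Rightarrow> 'a \<Rightarrow> bool) \<Rightarrow> real" where
  "entropy V E = Sup {gn V E q | q. q \<ge> 2}"

text \<open>Smaller graphs are taken on (arbitrary finite sets of) naturals,
  which covers every finite graph up to isomorphism.\<close>
definition entropy_minimal :: "'a set \<Rightarrow> ('a \<Rightarrow> 'a \<Rightarrow> bool) \<Rightarrow> bool" where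
  "entropy_minimal V E \<longleftrightarrow> simple_graph V E \<and>
     (\<forall>(V' :: nat set) E'. simple_graph V' E' \<and> card V' < card V \<longrightarrow>
        frac (entropy V' E') \<noteq> frac (entropy V E))"

definition nbhd :: "'a set \<Rightarrow> ('a \<Rightarrow> 'a \<Rightarrow> bool) \<Rightarrow> 'a \<Rightarrow> 'a set" where
  "nbhd V E v = {u \<in> V. E v u}"

definition cl :: "'a set \<Rightarrow> ('a \<Rightarrow> 'a \<Rightarrow> bool) \<Rightarrow> 'a set \<Rightarrow> 'a set" where
  "cl V E S = {v \<in> V - S. nbhd V E v \<subseteq> S}"

definition bip_matching :: "('a \<Rightarrow> 'a \<Rightarrow> bool) \<Rightarrow> 'a set \<Rightarrow> 'a set \<Rightarrow> ('a \<times> 'a) set \<Rightarrow> bool" where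
  "bip_matching E T S M \<longleftrightarrow>
     (\<forall>(t,s)\<in>M. t \<in> T \<and> s \<in> S \<and> E t s) \<and>
     (\<forall>(t,s)\<in>M. \<forall>(t',s')\<in>M. (t = t' \<or> s = s') \<longrightarrow> (t,s) = (t',s'))"

definition saturates :: "('a \<times> 'a) set \<Rightarrow> 'a set \<Rightarrow> bool" where
  "saturates M S \<longleftrightarrow> (\<forall>s\<in>S. \<exists>t. (t,s) \<in> M)"

end

theory Submission
  imports Defs
begin

lemma configs_card:
  assumes "finite V"
  shows "finite (configs V q) \<and> card (configs V q) = q ^ card V"
  using assms
proof (induction V rule: finite_induct)
  case empty
  have e: "configs {} q = {\<lambda>_. 0}" by (auto simp: configs_def)
  show ?case unfolding e by simp
next
  case (insert v S)
  let ?phi = "\<lambda>(c::nat, y::'a \<Rightarrow> nat). y(v := c)"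
  have bij: "bij_betw ?phi ({..<q} \<times> configs S q) (configs (insert v S) q)"
  proof (rule bij_betw_imageI)
    show "inj_on ?phi ({..<q} \<times> configs S q)"
    proof (rule inj_onI, clarsimp)
      fix c y c' y'
      assume y: "y \<in> configs S q" and y': "y' \<in> configs S q" and eq: "y(v := c) = y'(v := c')"
      have "c = c'" using fun_cong[OF eq, of v] by simp
      moreover have "y = y'"
      proof
        fix w show "y w = y' w"
        proof (cases "w = v")
          case True then show ?thesis using y y' insert(2) by (auto simp: configs_def)
        next
          case False then show ?thesis using fun_cong[OF eq, of w] by simp
        qed
      qed
      ultimately show "c = c' \<and> y = y'" by simp
    qed
    show "?phi ` ({..<q} \<times> configs S q) = configs (insert v S) q"
    proof (intro equalityI subsetI)
      fix x assume "x \<in> ?phi ` ({..<q} \<times> configs S q)"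
      then show "x \<in> configs (insert v S) q" by (auto simp: configs_def)
    next
      fix x assume x: "x \<in> configs (insert v S) q"
      have "x = ?phi (x v, x(v := 0))" by simp
      moreover have "(x v, x(v:=0)) \<in> {..<q} \<times> configs S q"
        using x by (auto simp: configs_def)
      ultimately show "x \<in> ?phi ` ({..<q} \<times> configs S q)" by blast
    qed
  qed
  have "finite ({..<q} \<times> configs S q)" using insert by simp
  moreover have "card ({..<q} \<times> configs S q) = q * q ^ card S"
    using insert by (simp add: card_cartesian_product)
  ultimately show ?case using bij_betw_finite[OF bij] bij_betw_same_card[OF bij] insert
    by simp
qed

lemma not_depends:
  assumes "\<not> depends V q f u v" "a \<in> configs V q" "b \<in> configs V q" "\<forall>w. w \<noteq> u \<longrightarrow> a w = b w"
  shows "f a v = f b v"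
  using assms unfolding depends_def by blast

lemma locality:
  assumes "finite V" "a \<in> configs V q" "b \<in> configs V q"
    "\<forall>u\<in>V. a u \<noteq> b u \<longrightarrow> \<not> depends V q f u v"
  shows "f a v = f b v"
proof -
  have "\<And>a. a \<in> configs V q \<Longrightarrow> (\<forall>u\<in>V. a u \<noteq> b u \<longrightarrow> \<not> depends V q f u v)
        \<Longrightarrow> card {u\<in>V. a u \<noteq> b u} = n \<Longrightarrow> f a v = f b v" for n
  proof (induction n rule: less_induct)
    case (less n a)
    show ?case
    proof (cases "{u\<in>V. a u \<noteq> b u} = {}")
      case True
      have "a = b"
      proof
        fix w show "a w = b w"
          using True less.prems(1) assms(3) by (cases "w \<in> V") (auto simp: configs_def)
      qed
      then show ?thesis by simp
    next
      case False
      then obtain u where u: "u \<in> V" "a u \<noteq> b u" by auto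
      define a' where "a' = a(u := b u)"
      have a'c: "a' \<in> configs V q" using less.prems(1) assms(3) u
        by (auto simp: configs_def a'_def)
      have e1: "f a v = f a' v"
        by (rule not_depends[OF _ less.prems(1) a'c]) (use less.prems(2) u in \<open>auto simp: a'_def\<close>)
      have "{u\<in>V. a' u \<noteq> b u} = {u\<in>V. a u \<noteq> b u} - {u}"
        by (auto simp: a'_def)
      moreover have "n > 0" using less.prems(3) u assms(1) by (auto simp: card_gt_0_iff)
      ultimately have lt: "card {u\<in>V. a' u \<noteq> b u} < n"
        using less.prems(3) u assms(1) by (simp add: card_Diff1_less)
      have nd: "\<forall>w\<in>V. a' w \<noteq> b w \<longrightarrow> \<not> depends V q f w v"
        using less.prems(2) by (auto simp: a'_def)
      have "f a' v = f b v"
        by (rule less.IH[OF lt a'c nd refl])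
      then show ?thesis using e1 by simp
    qed
  qed
  then show ?thesis using assms by blast
qed

definition fc :: "'a set \<Rightarrow> ('a \<Rightarrow> 'a \<Rightarrow> bool) \<Rightarrow> nat \<Rightarrow> nat set" where
  "fc V E q = {card (Fix V q f) | f. is_map V q f \<and> IG_sub V E q f}"

definition Mx :: "'a set \<Rightarrow> ('a \<Rightarrow> 'a \<Rightarrow> bool) \<Rightarrow> nat \<Rightarrow> nat" where
  "Mx V E q = Max (fc V E q)"

lemma fin_Fix: "finite V \<Longrightarrow> finite (Fix V q f)"
  using configs_card[of V q] by (metis (no_types, lifting) Fix_def finite_subset mem_Collect_eq subsetI)

lemma fc_sub: "finite V \<Longrightarrow> fc V E q \<subseteq> {..q ^ card V}"
proof
  fix n assume V: "finite V" and "n \<in> fc V E q"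
  then obtain f where "n = card (Fix V q f)" by (auto simp: fc_def)
  moreover have "Fix V q f \<subseteq> configs V q" by (auto simp: Fix_def)
  moreover have "card (Fix V q f) \<le> card (configs V q)"
    by (rule card_mono[OF conjunct1[OF configs_card[OF V, of q]]]) (auto simp: Fix_def)
  ultimately show "n \<in> {..q ^ card V}" using configs_card[OF V, of q] by auto
qed

lemma one_in_fc: "0 < q \<Longrightarrow> 1 \<in> fc V E q"
proof -
  assume q: "0 < q"
  let ?f = "\<lambda>(x::'a \<Rightarrow> nat) (v::'a). 0::nat"
  have "Fix V q ?f = {\<lambda>_. 0}" using q by (auto simp: Fix_def configs_def)
  moreover have "is_map V q ?f" using q by (auto simp: is_map_def configs_def)
  moreover have "IG_sub V E q ?f" by (auto simp: IG_sub_def depends_def)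
  ultimately show ?thesis unfolding fc_def
    by (intro CollectI exI[of _ ?f]) simp
qed

lemma fc_finite: "finite V \<Longrightarrow> finite (fc V E q)"
  by (rule finite_subset[OF fc_sub]) auto

lemma Mx_in: assumes "finite V" "0 < q" shows "Mx V E q \<in> fc V E q"
proof -
  have "fc V E q \<noteq> {}" using one_in_fc[OF assms(2)] by auto
  then show ?thesis unfolding Mx_def by (rule Max_in[OF fc_finite[OF assms(1)]])
qed

lemma Mx_ge: "finite V \<Longrightarrow> n \<in> fc V E q \<Longrightarrow> n \<le> Mx V E q"
  unfolding Mx_def by (rule Max_ge[OF fc_finite])

lemma Mx_pos: "finite V \<Longrightarrow> 0 < q \<Longrightarrow> 1 \<le> Mx V E q"
  by (rule Mx_ge[OF _ one_in_fc])

lemma Mx_le: assumes "finite V" "0 < q" shows "Mx V E q \<le> q ^ card V"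
proof -
  have "Mx V E q \<in> {..q ^ card V}" using Mx_in[OF assms] fc_sub[OF assms(1)] by (rule subsetD[rotated])
  then show ?thesis by simp
qed

lemma gn_eq:
  assumes "finite V" "2 \<le> q"
  shows "gn V E q = log (real q) (real (Mx V E q))"
proof -
  have set: "{log (real q) (real (card (Fix V q f))) | f. is_map V q f \<and> IG_sub V E q f}
     = (\<lambda>n. log (real q) (real n)) ` fc V E q" by (auto simp: fc_def)
  have mono: "mono (\<lambda>n::nat. log (real q) (real n))"
  proof (rule monoI)
    fix m n :: nat assume "m \<le> n"
    show "log (real q) (real m) \<le> log (real q) (real n)"
    proof (cases "m = 0")
      case True
      have "0 \<le> ln (real n)" by (cases "n = 0") (auto intro: ln_ge_zero)
      moreover have "0 < ln (real q)" using assms(2) by simp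
      ultimately show ?thesis using True by (simp add: log_def)
    next
      case False then show ?thesis using \<open>m \<le> n\<close> assms(2) by (simp add: log_def divide_right_mono)
    qed
  qed
  have "gn V E q = Max ((\<lambda>n. log (real q) (real n)) ` fc V E q)" unfolding gn_def set ..
  also have "\<dots> = log (real q) (real (Mx V E q))"
  proof -
    have "fc V E q \<noteq> {}" using one_in_fc[of q V E] assms by auto
    then show ?thesis unfolding Mx_def using mono_Max_commute[OF mono fc_finite[OF assms(1)]] by simp
  qed
  finally show ?thesis .
qed

definition rs :: "'a set \<Rightarrow> ('a \<Rightarrow> nat) \<Rightarrow> ('a \<Rightarrow> nat)" where
  "rs A x = (\<lambda>v. if v \<in> A then x v else 0)"

lemma rs_configs: "A \<subseteq> V \<Longrightarrow> x \<in> configs V q \<Longrightarrow> rs A x \<in> configs A q"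
  by (auto simp: rs_def configs_def)

lemma reduce_upper:
  assumes fin: "finite V" and SV: "S \<subseteq> V" and sym: "\<forall>u v. E u v \<longrightarrow> E v u"
    and f: "is_map V q f" "IG_sub V E q f"
    and R_def: "R = V - S - cl V E S" and q: "0 < q"
  shows "card (Fix V q f) \<le> q ^ card S * Mx R E q"
proof -
  have finR: "finite R" using fin by (simp add: R_def)
  have finS: "finite S" using fin SV finite_subset by blast
  have RV: "R \<subseteq> V" by (auto simp: R_def)
  define mg where "mg y a = (\<lambda>v. if v \<in> R then y v else if v \<in> S then a v else 0)"
    for y a :: "'a \<Rightarrow> nat"
  define g where "g a y = (\<lambda>v. if v \<in> R then f (mg y a) v else 0)" for a y
  define F where "F = Fix V q f"
  define Fa where "Fa a = {x \<in> F. rs S x = a}" for a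
  have mgc: "mg y a \<in> configs V q" if "y \<in> configs R q" "a \<in> configs S q" for y a
    using that SV RV q by (auto simp: mg_def configs_def)
  have fcv: "f x \<in> configs V q" if "x \<in> configs V q" for x using f(1) that by (auto simp: is_map_def)
  have dep: "E u v" if "depends V q f u v" "u \<in> V" "v \<in> V" for u v
    using f(2) that by (auto simp: IG_sub_def)
  have ga_map: "is_map R q (g a)" if a: "a \<in> configs S q" for a
    unfolding is_map_def
  proof
    fix y assume "y \<in> configs R q"
    hence "f (mg y a) \<in> configs V q" using fcv mgc a by blast
    thus "g a y \<in> configs R q" using RV by (auto simp: g_def configs_def)
  qed
  have ga_ig: "IG_sub R E q (g a)" if a: "a \<in> configs S q" for a
    unfolding IG_sub_def
  proof (intro ballI impI)
    fix u v assume uv: "u \<in> R" "v \<in> R" and "depends R q (g a) u v"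
    then obtain y1 y2 where y: "y1 \<in> configs R q" "y2 \<in> configs R q"
      "\<forall>w. w \<noteq> u \<longrightarrow> y1 w = y2 w" "g a y1 v \<noteq> g a y2 v"
      by (auto simp: depends_def)
    have "depends V q f u v" unfolding depends_def
      apply (rule bexI[of _ "mg y1 a"], rule bexI[of _ "mg y2 a"])
      using y uv mgc a by (auto simp: mg_def g_def)
    thus "E u v" using dep uv RV by auto
  qed
  have ga_fc: "card (Fix R q (g a)) \<le> Mx R E q" if "a \<in> configs S q" for a
    by (rule Mx_ge[OF finR]) (use ga_map[OF that] ga_ig[OF that] in \<open>auto simp: fc_def\<close>)
  have Fa_le: "card (Fa a) \<le> Mx R E q" if a: "a \<in> configs S q" for a
  proof -
    have inj: "inj_on (rs R) (Fa a)"
    proof (rule inj_onI)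
      fix x x' assume x: "x \<in> Fa a" and x': "x' \<in> Fa a" and eq: "rs R x = rs R x'"
      have xc: "x \<in> configs V q" "f x = x" using x by (auto simp: Fa_def F_def Fix_def)
      have xc': "x' \<in> configs V q" "f x' = x'" using x' by (auto simp: Fa_def F_def Fix_def)
      have onS: "x v = x' v" if "v \<in> S" for v
      proof -
        have "rs S x v = rs S x' v" using x x' by (simp add: Fa_def)
        thus ?thesis using that by (simp add: rs_def)
      qed
      show "x = x'"
      proof
        fix v
        show "x v = x' v"
        proof (cases "v \<in> V")
          case False thus ?thesis using xc xc' by (auto simp: configs_def)
        next
          case vV: True
          show ?thesis
          proof (cases "v \<in> S")
            case True thus ?thesis by (rule onS)
          next
            case vS: False
            show ?thesis
            proof (cases "v \<in> R")
              case True thus ?thesis using fun_cong[OF eq, of v] by (simp add: rs_def)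
            next
              case False
              with vV vS have vT: "v \<in> cl V E S" by (auto simp: R_def)
              have "f x v = f x' v"
              proof (rule locality[OF fin xc(1) xc'(1)], intro ballI impI notI)
                fix u assume u: "u \<in> V" "x u \<noteq> x' u" "depends V q f u v"
                hence "E u v" using dep vV by auto
                hence "u \<in> S" using vT sym u(1) by (auto simp: cl_def nbhd_def)
                thus False using onS u(2) by auto
              qed
              thus ?thesis using xc(2) xc'(2) by simp
            qed
          qed
        qed
      qed
    qed
    have img: "rs R ` Fa a \<subseteq> Fix R q (g a)"
    proof
      fix z assume "z \<in> rs R ` Fa a"
      then obtain x where x: "x \<in> Fa a" and z: "z = rs R x" by auto
      have xc: "x \<in> configs V q" "f x = x" "rs S x = a" using x by (auto simp: Fa_def F_def Fix_def)
      have zc: "z \<in> configs R q" using rs_configs[OF RV xc(1)] z by simp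
      have "g a z = z"
      proof
        fix v show "g a z v = z v"
        proof (cases "v \<in> R")
          case False thus ?thesis by (simp add: g_def z rs_def)
        next
          case vR: True
          have "f (mg z a) v = f x v"
          proof (rule locality[OF fin mgc[OF zc a] xc(1)], intro ballI impI notI)
            fix u assume u: "u \<in> V" "mg z a u \<noteq> x u" "depends V q f u v"
            have "u \<in> cl V E S"
            proof (rule ccontr)
              assume "u \<notin> cl V E S"
              then have "u \<in> R \<or> u \<in> S" using u(1) by (auto simp: R_def)
              thus False using u(2) fun_cong[OF xc(3), of u] by (auto simp: mg_def z rs_def R_def)
            qed
            moreover have "E u v" using dep u vR RV by auto
            ultimately have "v \<in> S" using vR RV by (auto simp: cl_def nbhd_def)
            thus False using vR by (simp add: R_def)
          qed
          thus ?thesis using vR xc(2) by (simp add: g_def z rs_def)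
        qed
      qed
      thus "z \<in> Fix R q (g a)" using zc by (simp add: Fix_def)
    qed
    have "card (Fa a) = card (rs R ` Fa a)" using inj by (simp add: card_image)
    also have "\<dots> \<le> card (Fix R q (g a))" by (rule card_mono[OF fin_Fix[OF finR] img])
    also have "\<dots> \<le> Mx R E q" by (rule ga_fc[OF a])
    finally show ?thesis .
  qed
  have Fcov: "F \<subseteq> (\<Union>a\<in>configs S q. Fa a)"
    using rs_configs[OF SV] by (auto simp: F_def Fa_def Fix_def)
  have Usub: "(\<Union>a\<in>configs S q. Fa a) \<subseteq> configs V q" by (auto simp: Fa_def F_def Fix_def)
  have finU: "finite (\<Union>a\<in>configs S q. Fa a)"
    by (rule finite_subset[OF Usub conjunct1[OF configs_card[OF fin]]])
  have "card F \<le> card (\<Union>a\<in>configs S q. Fa a)"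
    by (rule card_mono[OF finU Fcov])
  also have "\<dots> \<le> (\<Sum>a\<in>configs S q. card (Fa a))" by (rule card_UN_le[OF conjunct1[OF configs_card[OF finS]]])
  also have "\<dots> \<le> (\<Sum>a\<in>configs S q. Mx R E q)" by (rule sum_mono) (rule Fa_le)
  also have "\<dots> = q ^ card S * Mx R E q" using configs_card[OF finS, of q] by simp
  finally show ?thesis by (simp add: F_def)
qed

lemma reduce_lower:
  assumes fin: "finite V" and SV: "S \<subseteq> V" and sym: "\<forall>u v. E u v \<longrightarrow> E v u"
    and m: "inj_on m S" "\<forall>s\<in>S. m s \<in> cl V E S \<and> E (m s) s"
    and R_def: "R = V - S - cl V E S" and q: "0 < q"
    and f': "is_map R q f'" "IG_sub R E q f'"
  shows "\<exists>f. is_map V q f \<and> IG_sub V E q f \<and> q ^ card S * card (Fix R q f') \<le> card (Fix V q f)"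
proof -
  have finS: "finite S" using fin SV finite_subset by blast
  define mi where "mi = inv_into S m"
  have mST: "m s \<in> cl V E S" "E (m s) s" if "s \<in> S" for s using m(2) that by auto
  have TV: "cl V E S \<subseteq> V" and TS: "cl V E S \<inter> S = {}" by (auto simp: cl_def)
  have mimS: "mi (m s) = s" if "s \<in> S" for s using m(1) that by (simp add: mi_def)
  have mi_in: "mi t \<in> S" if "t \<in> m ` S" for t using that by (auto simp: mi_def inv_into_into)
  have mSV: "m ` S \<subseteq> V" using mST TV by auto
  have mSS: "m ` S \<inter> S = {}" using mST TS by auto
  have RV: "R \<subseteq> V" and RS: "R \<inter> S = {}" and RmS: "R \<inter> m ` S = {}" using mST by (auto simp: R_def)
  define f where "f x = (\<lambda>v. if v \<in> S then x (m v) else if v \<in> m ` S then x (mi v)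
      else if v \<in> R then f' (rs R x) v else 0)" for x
  have ismap: "is_map V q f" unfolding is_map_def
  proof
    fix x assume x: "x \<in> configs V q"
    have fr: "f' (rs R x) \<in> configs R q" using f'(1) rs_configs[OF RV x] by (auto simp: is_map_def)
    show "f x \<in> configs V q" unfolding configs_def
    proof (intro CollectI conjI ballI allI impI)
      fix v assume "v \<in> V"
      show "f x v < q"
      proof (cases "v \<in> S")
        case True
        then show ?thesis using x mSV by (auto simp: f_def configs_def)
      next
        case False
        show ?thesis
        proof (cases "v \<in> m ` S")
          case True then show ?thesis using x mi_in[OF True] SV \<open>v \<notin> S\<close> by (auto simp: f_def configs_def)
        next
          case False2: False
          then show ?thesis using fr \<open>v \<notin> S\<close> x \<open>v \<in> V\<close> q
            by (cases "v \<in> R") (auto simp: f_def configs_def)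
        qed
      qed
    next
      fix v assume "v \<notin> V"
      then show "f x v = 0" using SV mSV RV by (auto simp: f_def)
    qed
  qed
  have ig: "IG_sub V E q f" unfolding IG_sub_def
  proof (intro ballI impI)
    fix u v assume uv: "u \<in> V" "v \<in> V" and "depends V q f u v"
    then obtain a b where ab: "a \<in> configs V q" "b \<in> configs V q"
      "\<forall>w. w \<noteq> u \<longrightarrow> a w = b w" "f a v \<noteq> f b v"
      by (auto simp: depends_def)
    show "E u v"
    proof (cases "v \<in> S")
      case True
      hence "a (m v) \<noteq> b (m v)" using ab(4) by (simp add: f_def)
      hence "u = m v" using ab(3) by auto
      thus ?thesis using mST True by simp
    next
      case vS: False
      show ?thesis
      proof (cases "v \<in> m ` S")
        case True
        then obtain s where s: "s \<in> S" "v = m s" by auto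
        hence "a s \<noteq> b s" using ab(4) vS by (simp add: f_def mimS)
        hence "u = s" using ab(3) by auto
        thus ?thesis using s mST sym by blast
      next
        case vmS: False
        show ?thesis
        proof (cases "v \<in> R")
          case False thus ?thesis using ab(4) vS vmS by (simp add: f_def)
        next
          case vR: True
          have ne: "f' (rs R a) v \<noteq> f' (rs R b) v" using ab(4) vS vmS vR by (simp add: f_def)
          have uR: "u \<in> R"
          proof (rule ccontr)
            assume "u \<notin> R"
            hence "rs R a = rs R b" using ab(3) by (auto simp: rs_def fun_eq_iff)
            thus False using ne by simp
          qed
          have "depends R q f' u v" unfolding depends_def
            apply (rule bexI[of _ "rs R a"], rule bexI[of _ "rs R b"])
            using rs_configs[OF RV ab(1)] rs_configs[OF RV ab(2)] ab(3) ne by (auto simp: rs_def)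
          thus ?thesis using f'(2) uR vR by (auto simp: IG_sub_def)
        qed
      qed
    qed
  qed
  define emb where "emb = (\<lambda>(a, y). (\<lambda>v. if v \<in> S then a v else if v \<in> m ` S then a (mi v)
      else if v \<in> R then y v else (0::nat)))"
  have emb_inj: "inj_on emb (configs S q \<times> Fix R q f')"
  proof (rule inj_onI, clarify)
    fix a y a' y'
    assume A: "a \<in> configs S q" "y \<in> Fix R q f'" "a' \<in> configs S q" "y' \<in> Fix R q f'"
      and eq: "emb (a,y) = emb (a',y')"
    have "a = a'"
    proof
      fix v show "a v = a' v"
        using fun_cong[OF eq, of v] A by (cases "v \<in> S") (auto simp: emb_def configs_def)
    qed
    moreover have "y = y'"
    proof
      fix v show "y v = y' v"
      proof (cases "v \<in> R")
        case True
        hence "v \<notin> S" "v \<notin> m ` S" using RS RmS by blast+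
        thus ?thesis using fun_cong[OF eq, of v] True by (simp add: emb_def)
      next
        case False thus ?thesis using A by (auto simp: Fix_def configs_def)
      qed
    qed
    ultimately show "a = a' \<and> y = y'" by simp
  qed
  have emb_img: "emb ` (configs S q \<times> Fix R q f') \<subseteq> Fix V q f"
  proof clarify
    fix a y assume a: "a \<in> configs S q" and y: "y \<in> Fix R q f'"
    have yc: "y \<in> configs R q" "f' y = y" using y by (auto simp: Fix_def)
    let ?x = "emb (a, y)"
    have xc: "?x \<in> configs V q" unfolding configs_def
    proof (intro CollectI conjI ballI allI impI)
      fix v assume "v \<in> V"
      show "?x v < q"
        using a yc mi_in \<open>v \<in> V\<close> q by (auto simp: emb_def configs_def)
    next
      fix v assume "v \<notin> V"
      then show "?x v = 0" using SV mSV RV by (auto simp: emb_def)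
    qed
    have rsx: "rs R ?x = y"
      unfolding rs_def emb_def by (rule ext) (use yc(1) RS RmS in \<open>auto simp: configs_def\<close>)
    have "f ?x = ?x"
    proof
      fix v show "f ?x v = ?x v"
      proof (cases "v \<in> S")
        case True
        have "m v \<in> m ` S" "m v \<notin> S" using True mSS by auto
        thus ?thesis using True by (simp add: f_def emb_def mimS)
      next
        case False
        show ?thesis
        proof (cases "v \<in> m ` S")
          case True thus ?thesis using False mi_in[OF True] by (simp add: f_def emb_def)
        next
          case False2: False
          thus ?thesis using False rsx yc(2) by (simp add: f_def emb_def)
        qed
      qed
    qed
    thus "emb (a, y) \<in> Fix V q f" using xc by (simp add: Fix_def)
  qed
  have "q ^ card S * card (Fix R q f') = card (configs S q \<times> Fix R q f')"
    using configs_card[OF finS, of q] by (simp add: card_cartesian_product)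
  also have "\<dots> = card (emb ` (configs S q \<times> Fix R q f'))" using emb_inj by (simp add: card_image)
  also have "\<dots> \<le> card (Fix V q f)" by (rule card_mono[OF fin_Fix[OF fin] emb_img])
  finally show ?thesis using ismap ig by blast
qed

lemma reduce:
  assumes fin: "finite V" and SV: "S \<subseteq> V" and sym: "\<forall>u v. E u v \<longrightarrow> E v u"
    and m: "inj_on m S" "\<forall>s\<in>S. m s \<in> cl V E S \<and> E (m s) s"
    and R_def: "R = V - S - cl V E S" and q: "0 < q"
  shows "Mx V E q = q ^ card S * Mx R E q"
proof (rule antisym)
  have finR: "finite R" using fin by (simp add: R_def)
  obtain f where f: "Mx V E q = card (Fix V q f)" "is_map V q f" "IG_sub V E q f"
    using Mx_in[OF fin q, of E] by (auto simp: fc_def)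
  show "Mx V E q \<le> q ^ card S * Mx R E q"
    using reduce_upper[OF fin SV sym f(2,3) R_def q] f(1) by simp
  obtain f' where f': "Mx R E q = card (Fix R q f')" "is_map R q f'" "IG_sub R E q f'"
    using Mx_in[OF finR q, of E] by (auto simp: fc_def)
  obtain g where g: "is_map V q g" "IG_sub V E q g" "q ^ card S * card (Fix R q f') \<le> card (Fix V q g)"
    using reduce_lower[OF fin SV sym m R_def q f'(2,3)] by blast
  have "card (Fix V q g) \<le> Mx V E q" by (rule Mx_ge[OF fin]) (use g in \<open>auto simp: fc_def\<close>)
  then show "q ^ card S * Mx R E q \<le> Mx V E q" using g(3) f'(1) by simp
qed

lemma transport:
  fixes h :: "'a \<Rightarrow> 'b"
  assumes bij: "bij_betw h A B"
    and edge: "\<forall>u\<in>A. \<forall>v\<in>A. EA u v \<longrightarrow> EB (h u) (h v)"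
  shows "fc A EA q \<subseteq> fc B EB q"
proof
  fix n assume "n \<in> fc A EA q"
  then obtain f where n: "n = card (Fix A q f)" and fm: "is_map A q f" "IG_sub A EA q f"
    by (auto simp: fc_def)
  define hi where "hi = inv_into A h"
  have hiB: "hi b \<in> A" if "b \<in> B" for b using bij that
    by (auto simp: hi_def bij_betw_def inv_into_into)
  have hhi: "h (hi b) = b" if "b \<in> B" for b using bij that
    by (auto simp: hi_def bij_betw_def f_inv_into_f)
  have hih: "hi (h a) = a" if "a \<in> A" for a using bij that
    by (auto simp: hi_def bij_betw_def inv_into_f_f)
  have hA: "h a \<in> B" if "a \<in> A" for a using bij that by (auto simp: bij_betw_def)
  define push where "push x = (\<lambda>b. if b \<in> B then x (hi b) else 0)" for x :: "'a \<Rightarrow> nat"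
  define pull where "pull y = (\<lambda>a. if a \<in> A then y (h a) else 0)" for y :: "'b \<Rightarrow> nat"
  define g where "g y = push (f (pull y))" for y
  have pullc: "pull y \<in> configs A q" if "y \<in> configs B q" for y
    using that hA by (auto simp: pull_def configs_def)
  have pushc: "push x \<in> configs B q" if "x \<in> configs A q" for x
    using that hiB by (auto simp: push_def configs_def)
  have pullpush: "pull (push x) = x" if "x \<in> configs A q" for x
    using that hA hih by (auto simp: pull_def push_def configs_def fun_eq_iff)
  have pushpull: "push (pull y) = y" if "y \<in> configs B q" for y
    using that hiB hhi by (auto simp: pull_def push_def configs_def fun_eq_iff)
  have fA: "f x \<in> configs A q" if "x \<in> configs A q" for x using fm(1) that by (auto simp: is_map_def)
  have gmap: "is_map B q g" unfolding is_map_def g_def using pullc pushc fA by blast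
  have gig: "IG_sub B EB q g" unfolding IG_sub_def
  proof (intro ballI impI)
    fix u v assume uv: "u \<in> B" "v \<in> B" "depends B q g u v"
    then obtain a b where ab: "a \<in> configs B q" "b \<in> configs B q"
      "\<forall>w. w \<noteq> u \<longrightarrow> a w = b w" "g a v \<noteq> g b v"
      by (auto simp: depends_def)
    have ne: "f (pull a) (hi v) \<noteq> f (pull b) (hi v)" using ab(4) uv by (simp add: g_def push_def)
    have agree: "\<forall>w. w \<noteq> hi u \<longrightarrow> pull a w = pull b w"
    proof (intro allI impI)
      fix w assume w: "w \<noteq> hi u"
      show "pull a w = pull b w"
      proof (cases "w \<in> A")
        case True
        hence "h w \<noteq> u" using w hih by auto
        thus ?thesis using ab(3) True by (simp add: pull_def)
      qed (simp add: pull_def)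
    qed
    have "depends A q f (hi u) (hi v)" unfolding depends_def
      using pullc[OF ab(1)] pullc[OF ab(2)] agree ne by blast
    hence "EA (hi u) (hi v)" using fm(2) hiB uv by (auto simp: IG_sub_def)
    hence "EB (h (hi u)) (h (hi v))" using edge hiB uv by blast
    thus "EB u v" using hhi uv by simp
  qed
  have fixeq: "Fix B q g = push ` Fix A q f"
  proof (intro equalityI subsetI)
    fix y assume "y \<in> Fix B q g"
    hence y: "y \<in> configs B q" "push (f (pull y)) = y" by (auto simp: Fix_def g_def)
    have "pull y = pull (push (f (pull y)))" using y(2) by simp
    also have "\<dots> = f (pull y)" using pullpush fA pullc y(1) by simp
    finally have "pull y \<in> Fix A q f" using pullc y(1) by (simp add: Fix_def)
    moreover have "y = push (pull y)" using pushpull y(1) by simp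
    ultimately show "y \<in> push ` Fix A q f" by blast
  next
    fix y assume "y \<in> push ` Fix A q f"
    then obtain x where x: "x \<in> configs A q" "f x = x" "y = push x" by (auto simp: Fix_def)
    show "y \<in> Fix B q g" using x pushc pullpush by (simp add: Fix_def g_def)
  qed
  have "inj_on push (Fix A q f)"
  proof (rule inj_onI)
    fix x x' assume "x \<in> Fix A q f" "x' \<in> Fix A q f" "push x = push x'"
    thus "x = x'" using pullpush by (metis (no_types, lifting) Fix_def mem_Collect_eq)
  qed
  hence "card (Fix B q g) = n" using n fixeq by (simp add: card_image)
  thus "n \<in> fc B EB q" using gmap gig unfolding fc_def by blast
qed

theorem lemma3:
  fixes V :: "'a set" and E :: "'a \<Rightarrow> 'a \<Rightarrow> bool"
  assumes "entropy_minimal V E"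
  shows "\<forall>S. S \<subseteq> V \<and> S \<noteq> {} \<longrightarrow>
           \<not> (\<exists>M. bip_matching E (cl V E S) S M \<and> saturates M S)"
proof (intro allI impI notI)
  fix S assume S: "S \<subseteq> V \<and> S \<noteq> {}" and "\<exists>M. bip_matching E (cl V E S) S M \<and> saturates M S"
  then obtain M where M: "bip_matching E (cl V E S) S M" "saturates M S" by blast
  have sg: "simple_graph V E" and mini: "\<And>(V' :: nat set) E'. simple_graph V' E' \<Longrightarrow> card V' < card V \<Longrightarrow>
        frac (entropy V' E') \<noteq> frac (entropy V E)"
    using assms by (auto simp: entropy_minimal_def)
  have fin: "finite V" and sym: "\<forall>u v. E u v \<longrightarrow> E v u" and irr: "\<forall>u. \<not> E u u"
    using sg by (auto simp: simple_graph_def)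
  have SV: "S \<subseteq> V" and Sne: "S \<noteq> {}" using S by auto
  have finS: "finite S" using fin SV finite_subset by blast
  define m where "m s = (SOME t. (t, s) \<in> M)" for s
  have mM: "(m s, s) \<in> M" if "s \<in> S" for s
  proof -
    have "\<exists>t. (t, s) \<in> M" using M(2) that by (auto simp: saturates_def)
    thus ?thesis unfolding m_def by (rule someI_ex)
  qed
  have mprop: "\<forall>s\<in>S. m s \<in> cl V E S \<and> E (m s) s"
  proof
    fix s assume "s \<in> S"
    have H: "\<forall>(t,s)\<in>M. t \<in> cl V E S \<and> s \<in> S \<and> E t s"
      using M(1) unfolding bip_matching_def by (rule conjunct1)
    have "case_prod (\<lambda>t s. t \<in> cl V E S \<and> s \<in> S \<and> E t s) (m s, s)"
      by (rule bspec[OF H mM[OF \<open>s \<in> S\<close>]])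
    thus "m s \<in> cl V E S \<and> E (m s) s" by simp
  qed
  have minj: "inj_on m S"
  proof (rule inj_onI)
    fix s s' assume ss: "s \<in> S" "s' \<in> S" and eq: "m s = m s'"
    have H: "\<forall>(t,s)\<in>M. \<forall>(t',s')\<in>M. (t = t' \<or> s = s') \<longrightarrow> (t,s) = (t',s')"
      using M(1) unfolding bip_matching_def by (rule conjunct2)
    have "case_prod (\<lambda>t s. \<forall>(t',s')\<in>M. (t = t' \<or> s = s') \<longrightarrow> (t,s) = (t',s')) (m s, s)"
      by (rule bspec[OF H mM[OF ss(1)]])
    hence H2: "\<forall>(t',s')\<in>M. (m s = t' \<or> s = s') \<longrightarrow> (m s,s) = (t',s')" by simp
    have "case_prod (\<lambda>t' s'. (m s = t' \<or> s = s') \<longrightarrow> (m s,s) = (t',s')) (m s', s')"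
      by (rule bspec[OF H2 mM[OF ss(2)]])
    thus "s = s'" using eq by simp
  qed
  define R where "R = V - S - cl V E S"
  have finR: "finite R" using fin by (simp add: R_def)
  obtain g where g: "bij_betw g {0..<card R} R" using ex_bij_betw_nat_finite[OF finR] by blast
  define V' where "V' = {0..<card R}"
  define E' where "E' i j = (i \<in> V' \<and> j \<in> V' \<and> E (g i) (g j))" for i j
  have sg': "simple_graph V' E'" using sym irr by (auto simp: simple_graph_def V'_def E'_def)
  have finV': "finite V'" by (simp add: V'_def)
  have cardlt: "card V' < card V"
  proof -
    have "card R \<le> card (V - S)" by (rule card_mono) (use fin in \<open>auto simp: R_def\<close>)
    moreover have "card (V - S) < card V"
    proof -
      have "card (V - S) = card V - card S" by (rule card_Diff_subset[OF finS SV])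
      moreover have "0 < card S" using finS Sne by (simp add: card_gt_0_iff)
      moreover have "card S \<le> card V" by (rule card_mono[OF fin SV])
      ultimately show ?thesis by linarith
    qed
    ultimately show ?thesis by (simp add: V'_def)
  qed
  have gV: "bij_betw g V' R" using g by (simp add: V'_def)
  have MxEq: "Mx R E q = Mx V' E' q" for q
  proof -
    have 1: "fc V' E' q \<subseteq> fc R E q" by (rule transport[OF gV]) (auto simp: E'_def)
    have gi: "bij_betw (inv_into V' g) R V'" using gV by (rule bij_betw_inv_into)
    have 2: "fc R E q \<subseteq> fc V' E' q"
    proof (rule transport[OF gi], intro ballI impI)
      fix u v assume "u \<in> R" "v \<in> R" "E u v"
      thus "E' (inv_into V' g u) (inv_into V' g v)"
        using gV gi by (auto simp: E'_def bij_betw_def f_inv_into_f)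
    qed
    from 1 2 show ?thesis by (simp add: Mx_def)
  qed
  have gnEq: "gn V E q = real (card S) + gn V' E' q" if q: "2 \<le> q" for q
  proof -
    have q0: "0 < q" using q by simp
    have "Mx V E q = q ^ card S * Mx R E q" by (rule reduce[OF fin SV sym minj mprop R_def q0])
    hence "gn V E q = log (real q) (real q ^ card S * real (Mx V' E' q))"
      using gn_eq[OF fin q] MxEq by simp
    also have "\<dots> = log (real q) (real q ^ card S) + log (real q) (real (Mx V' E' q))"
      using Mx_pos[OF finV' q0, of E'] q0 by (subst log_mult) auto
    also have "\<dots> = real (card S) + gn V' E' q"
      using q by (simp add: log_nat_power gn_eq[OF finV' q])
    finally show ?thesis .
  qed
  have bdd: "bdd_above (gn V' E' ` {q. 2 \<le> q})"
  proof (rule bdd_aboveI2)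
    fix q :: nat assume "q \<in> {q. 2 \<le> q}"
    hence q: "2 \<le> q" by simp
    have "Mx V' E' q \<le> q ^ card V'" by (rule Mx_le[OF finV']) (use q in simp)
    hence "real (Mx V' E' q) \<le> real (q ^ card V')" by (simp only: of_nat_le_iff)
    hence "real (Mx V' E' q) \<le> real q ^ card V'" by simp
    hence "log (real q) (real (Mx V' E' q)) \<le> log (real q) (real q ^ card V')"
      using Mx_pos[OF finV', of q E'] q by (subst log_le_cancel_iff) auto
    thus "gn V' E' q \<le> real (card V')" using q by (simp add: gn_eq[OF finV' q] log_nat_power)
  qed
  have e1: "{gn V E q |q. 2 \<le> q} = (\<lambda>q. real (card S) + gn V' E' q) ` {q. 2 \<le> q}"
  proof (intro equalityI subsetI)
    fix x assume "x \<in> {gn V E q |q. 2 \<le> q}"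
    then obtain q where q: "x = gn V E q" "2 \<le> q" by blast
    show "x \<in> (\<lambda>q. real (card S) + gn V' E' q) ` {q. 2 \<le> q}"
      by (rule image_eqI[of _ _ q]) (use q gnEq in auto)
  next
    fix x assume "x \<in> (\<lambda>q. real (card S) + gn V' E' q) ` {q. 2 \<le> q}"
    then obtain q where q: "x = real (card S) + gn V' E' q" "2 \<le> q" by blast
    hence "x = gn V E q" using gnEq by simp
    thus "x \<in> {gn V E q |q. 2 \<le> q}" using q(2) by blast
  qed
  have e2: "{gn V' E' q |q. 2 \<le> q} = gn V' E' ` {q. 2 \<le> q}" by blast
  have "entropy V E = (SUP q\<in>{q. 2 \<le> q}. real (card S) + gn V' E' q)"
    unfolding entropy_def e1 ..
  also have "\<dots> = real (card S) + (SUP q\<in>{q. 2 \<le> q}. gn V' E' q)"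
    by (rule Sup_add_eq[OF bdd]) auto
  also have "\<dots> = real (card S) + entropy V' E'" unfolding entropy_def e2 ..
  finally have "frac (entropy V E) = frac (entropy V' E')"
    by (simp add: frac_add_int_left)
  thus False using mini[OF sg' cardlt] by simp
qed

end
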